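(* There exist an absolute constant $C$ and a threshold $\alpha_0$ such that for every error-free uncertain priors coding scheme $(E,D)$ and every integer $\alpha\geq\alpha_0$, there exist $\alpha$-close priors $P,Q\in\Delta(M)$ for which \[ \mathbb{E}_{m,R}\big[|E(m,\alpha,R,P)|\big]-\ell(P)\;\geq\;2\log\alpha-3\log\log\alpha-C, \] where $m\sim P$ and $R$ is uniformly random. In particular, the redundancy of every error-free uncertain priors coding scheme is at least $2\log\alpha-3\log\log\alpha-O(1)$.
   Context: All logarithms are base 2. $M$ is a set of messages and $\Delta(M)$ the set of probability distributions on $M$. For $\alpha\geq1$, $P,Q\in\Delta(M)$ are $\alpha$-close if $\frac{1}{\alpha}Q(m)\leq P(m)\leq\alpha Q(m)$ for every $m\in M$. An error-free uncertain priors coding scheme is a pair of functions $E:M\times\mathbb{N}\times\{0,1\}^{\mathbb{N}}\times\Delta(M)\to\{0,1\}^*$ and $D:\{0,1\}^*\times\mathbb{N}\times\{0,1\}^{\mathbb{N}}\times\Delta(M)\to M$ such that for every $m\in M$, $\alpha\in\mathbb{N}$, $R\in\{0,1\}^{\mathbb{N}}$, $P\in\Delta(M)$ and every $Q\in\Delta(M)$ that is $\alpha$-close to $P$, $D(E(m,\alpha,R,P),\alpha,R,Q)=m$. Here $R$ is a shared random string. The encoding length of $(E,D)$ for $P$ and $\alpha$ is $\mathbb{E}_{m,R}[|E(m,\alpha,R,P)|]$ with $m\sim P$ and $R$ uniform. $\ell(P)$ denotes the optimal one-to-one encoding length of $P$: the minimum over injective maps $c:M\to\{0,1\}^*$ of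 $\mathbb{E}_{m\sim P}[|c(m)|]$. The redundancy of $(E,D)$ for $\alpha$ is $\max_{P\in\Delta(M)}\{\mathbb{E}_{m,R}[|E(m,\alpha,R,P)|]-\ell(P)\}$. *)

theory Defs
  imports "HOL-Probability.Probability"
begin

text \<open>Messages: M = nat (a countably infinite message set). Priors: nat pmf.
  Shared randomness R :: nat \<Rightarrow> bool, distributed as independent fair coins.\<close>

definition coins :: "(nat \<Rightarrow> bool) measure" where
  "coins = PiM UNIV (\<lambda>_. measure_pmf (bernoulli_pmf (1/2)))"

definition alpha_close :: "real \<Rightarrow> nat pmf \<Rightarrow> nat pmf \<Rightarrow> bool" where
  "alpha_close \<alpha> P Q \<longleftrightarrow> (\<forall>m. (1/\<alpha>) * pmf Q m \<le> pmf P m \<and> pmf P m \<le> \<alpha> * pmf Q m)"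

definition error_free_scheme ::
  "(nat \<Rightarrow> nat \<Rightarrow> (nat \<Rightarrow> bool) \<Rightarrow> nat pmf \<Rightarrow> bool list)
   \<Rightarrow> (bool list \<Rightarrow> nat \<Rightarrow> (nat \<Rightarrow> bool) \<Rightarrow> nat pmf \<Rightarrow> nat) \<Rightarrow> bool" where
  "error_free_scheme E D \<longleftrightarrow>
     (\<forall>m \<alpha> R P Q. alpha_close (real \<alpha>) P Q \<longrightarrow> D (E m \<alpha> R P) \<alpha> R Q = m)"

definition enc_length ::
  "(nat \<Rightarrow> nat \<Rightarrow> (nat \<Rightarrow> bool) \<Rightarrow> nat pmf \<Rightarrow> bool list) \<Rightarrow> nat pmf \<Rightarrow> nat \<Rightarrow> ennreal" where
  "enc_length E P \<alpha> =
     (\<integral>\<^sup>+ m. (\<integral>\<^sup>+ R. ennreal (real (length (E m \<alpha> R P))) \<partial>coins) \<partial>measure_pmf P)"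

definition opt_len :: "nat pmf \<Rightarrow> ennreal" where
  "opt_len P = (INF c \<in> {c :: nat \<Rightarrow> bool list. inj c}.
                  \<integral>\<^sup>+ m. ennreal (real (length (c m))) \<partial>measure_pmf P)"

end

theory Submission
  imports Defs
begin


fun bin :: "nat \<Rightarrow> bool list" where
  "bin 0 = []" | "bin (Suc n) = even n # bin (n div 2)"

lemma bin_len: "2 ^ length (bin n) \<le> n + 1"
proof (induction n rule: less_induct)
  case (less n)
  show ?case
  proof (cases n)
    case 0 then show ?thesis by simp
  next
    case (Suc m)
    have "2 ^ length (bin (m div 2)) \<le> m div 2 + 1" using less Suc by simp
    then show ?thesis using Suc by simp
  qed
qed

lemma bin_inj_aux: "bin a = bin b \<Longrightarrow> a = b"
proof (induction a arbitrary: b rule: less_induct)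
  case (less a)
  show ?case
  proof (cases a)
    case 0 then show ?thesis using less.prems by (cases b) auto
  next
    case (Suc m)
    then obtain n where b: "b = Suc n" using less.prems by (cases b) auto
    have "even m = even n" "bin (m div 2) = bin (n div 2)" using less.prems Suc b by auto
    then have "m div 2 = n div 2" using less.IH Suc by auto
    with \<open>even m = even n\<close> have "m = n" by (metis div_mult_mod_eq even_iff_mod_2_eq_zero odd_iff_mod_2_eq_one)
    then show ?thesis using Suc b by simp
  qed
qed

lemma bin_inj: "inj bin" using bin_inj_aux by (auto intro: injI)

lemma card_short: "card {xs::bool list. length xs \<le> T} \<le> 2 ^ (T+1)"
proof -
  have "card {xs::bool list. length xs \<le> T} = (\<Sum>i\<le>T. 2^i)"
    using card_lists_length_le[of "UNIV::bool set" T] by simp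
  also have "\<dots> \<le> 2^(T+1)" by (induction T) auto
  finally show ?thesis .
qed

lemma finite_short: "finite {xs::bool list. length xs \<le> T}"
  using finite_lists_length_le[of "UNIV::bool set" T] by simp

lemma sum_len_lower:
  assumes "finite S" "inj_on c S"
  shows "int T * int (card S) - 2^(T+1) + 2 \<le> (\<Sum>m\<in>S. int (min (length ((c m)::bool list)) T))"
proof (induction T)
  case 0 then show ?case by simp
next
  case (Suc T)
  let ?A = "{m\<in>S. length (c m) \<le> T}"
  let ?B = "{m\<in>S. \<not> length (c m) \<le> T}"
  have "c ` ?A \<subseteq> {xs. length xs \<le> T}" by auto
  then have "card (c ` ?A) \<le> 2^(T+1)" using card_short finite_short card_mono order_trans by metis
  moreover have "card (c ` ?A) = card ?A" using assms by (intro card_image) (auto intro: inj_on_subset)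
  ultimately have cA: "card ?A \<le> 2^(T+1)" by simp
  have split: "card S = card ?A + card ?B"
    using assms(1) by (subst card_Un_disjoint[symmetric]) (auto intro: arg_cong[where f=card])
  have "(\<Sum>m\<in>S. int (min (length (c m)) (Suc T))) = (\<Sum>m\<in>S. int (min (length (c m)) T) + (if length (c m) \<le> T then 0 else 1))"
    by (intro sum.cong) auto
  also have "\<dots> = (\<Sum>m\<in>S. int (min (length (c m)) T)) + int (card ?B)"
  proof -
    have "int (card ?B) = (\<Sum>m\<in>?B. 1)" by simp
    also have "\<dots> = (\<Sum>m\<in>S. if \<not> length (c m) \<le> T then 1 else 0)"
      using assms(1) by (rule sum.inter_filter)
    also have "\<dots> = (\<Sum>m\<in>S. if length (c m) \<le> T then 0 else 1)" by (intro sum.cong) auto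
    finally have "int (card ?B) = (\<Sum>m\<in>S. if length (c m) \<le> T then 0 else 1)" .
    then show ?thesis by (simp add: sum.distrib)
  qed
  finally have e: "(\<Sum>m\<in>S. int (min (length (c m)) (Suc T))) = (\<Sum>m\<in>S. int (min (length (c m)) T)) + int (card ?B)" .
  have cA': "int (card ?A) \<le> 2^(T+1)" using cA by (metis of_nat_le_iff of_nat_numeral of_nat_power)
  have sp: "int (card S) = int (card ?A) + int (card ?B)" using split by simp
  have "int (Suc T) * int (card S) - 2 ^ (Suc T + 1) + 2 = (int T * int (card S) - 2^(T+1) + 2) + int (card S) - 2^(T+1)"
    by (simp add: algebra_simps)
  also have "\<dots> \<le> (\<Sum>m\<in>S. int (min (length (c m)) T)) + int (card ?B)"
    using Suc.IH sp cA' by linarith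
  finally show ?case using e by simp
qed
lemma key:
  fixes p :: "nat \<Rightarrow> nat \<Rightarrow> real" and f :: "nat \<Rightarrow> nat \<Rightarrow> bool list"
  assumes k: "k > 0" and pn: "\<And>i m. p i m \<ge> 0" and ps: "\<And>m. m < k \<Longrightarrow> (\<Sum>i<k. p i m) = 1"
    and fi: "\<And>i j m m'. i < k \<Longrightarrow> j < k \<Longrightarrow> m < k \<Longrightarrow> m' < k \<Longrightarrow> f i m = f j m' \<Longrightarrow> m = m'"
  shows "real T * real k - 2^(T+1) + 2 \<le> (\<Sum>i<k. \<Sum>m<k. p i m * real (length (f i m)))"
proof -
  have "\<forall>m. \<exists>i. i < k \<and> (\<forall>j. j < k \<longrightarrow> length (f i m) \<le> length (f j m))"
  proof
    fix m show "\<exists>i. i < k \<and> (\<forall>j. j < k \<longrightarrow> length (f i m) \<le> length (f j m))"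
      using ex_has_least_nat[of "\<lambda>i. i < k" 0 "\<lambda>i. length (f i m)"] k by blast
  qed
  from choice[OF this] obtain im where im0: "\<forall>m. im m < k \<and> (\<forall>j. j < k \<longrightarrow> length (f (im m) m) \<le> length (f j m))"
    by blast
  have im: "\<And>m. im m < k" "\<And>m j. j < k \<Longrightarrow> length (f (im m) m) \<le> length (f j m)"
    using im0 by auto
  define c where "c m = f (im m) m" for m
  have inj: "inj_on c {..<k}" unfolding inj_on_def c_def using fi im(1) by (metis lessThan_iff)
  have "(\<Sum>m<k. real (length (c m))) = (\<Sum>m<k. \<Sum>i<k. p i m * real (length (c m)))"
    by (simp add: sum_distrib_right[symmetric] ps)
  also have "\<dots> \<le> (\<Sum>m<k. \<Sum>i<k. p i m * real (length (f i m)))"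
    unfolding c_def by (intro sum_mono mult_left_mono) (auto simp: im pn)
  also have "\<dots> = (\<Sum>i<k. \<Sum>m<k. p i m * real (length (f i m)))" by (rule sum.swap)
  finally have 1: "(\<Sum>m<k. real (length (c m))) \<le> \<dots>" .
  have "int T * int (card {..<k}) - 2^(T+1) + 2 \<le> (\<Sum>m<k. int (min (length (c m)) T))"
    using sum_len_lower[OF _ inj] by simp
  then have "real_of_int (int T * int k - 2^(T+1) + 2) \<le> real_of_int (\<Sum>m<k. int (min (length (c m)) T))"
    by (simp only: of_int_le_iff card_lessThan)
  then have "real T * real k - 2^(T+1) + 2 \<le> (\<Sum>m<k. real (min (length (c m)) T))"
    by (simp only: of_int_sum of_int_add of_int_diff of_int_mult of_int_of_nat_eq of_int_power of_int_numeral)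
  also have "\<dots> \<le> (\<Sum>m<k. real (length (c m)))" by (intro sum_mono) auto
  finally show ?thesis using 1 by linarith
qed

lemma pow_ge: "n \<ge> 20 \<Longrightarrow> n \<le> 2 ^ (n div 4)"
proof -
  assume n: "n \<ge> 20"
  have "\<And>q. q \<ge> 5 \<Longrightarrow> 4*q+3 \<le> (2::nat)^q"
  proof -
    fix q :: nat assume "q \<ge> 5"
    then show "4*q+3 \<le> (2::nat)^q"
    proof (induction q rule: dec_induct)
      case base then show ?case by simp
    next
      case (step q)
      have "(4::nat) \<le> 2^q" 
      proof -
        have "(2::nat)^2 \<le> 2^q" using step(1) by (intro power_increasing) auto
        then show ?thesis by simp
      qed
      then show ?case using step by simp
    qed
  qed
  moreover have "n div 4 \<ge> 5" using n by simp
  ultimately have "4*(n div 4)+3 \<le> 2^(n div 4)" by blast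
  moreover have "n \<le> 4*(n div 4)+3" by simp
  ultimately show ?thesis by linarith
qed

lemma log_small: "n \<ge> 20 \<Longrightarrow> log 2 (real n) \<le> real n / 4"
proof -
  assume n: "n \<ge> 20"
  have "real n \<le> 2 ^ (n div 4)" using pow_ge[OF n] by (metis of_nat_le_iff of_nat_numeral of_nat_power)
  then have "log 2 (real n) \<le> log 2 (2 ^ (n div 4))" using n by (intro log_mono) auto
  also have "\<dots> = real (n div 4)" by (simp add: log_nat_power)
  also have "\<dots> \<le> real n / 4" by linarith
  finally show ?thesis .
qed

lemma nn_pmf_fin:
  fixes P :: "nat pmf" and k :: nat
  assumes "\<And>m. m \<ge> k \<Longrightarrow> pmf P m = 0"
  shows "(\<integral>\<^sup>+m. f m \<partial>measure_pmf P) = (\<Sum>m<k. ennreal (pmf P m) * f m)"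
  unfolding nn_integral_measure_pmf
  by (rule nn_integral_count_space'[of "{..<k}"]) (auto simp: assms)

lemma pmf_mk:
  fixes f :: "nat \<Rightarrow> real" and k :: nat
  assumes "\<And>m. f m \<ge> 0" "\<And>m. m \<ge> k \<Longrightarrow> f m = 0" "(\<Sum>m<k. f m) = 1"
  shows "pmf (embed_pmf f) m = f m"
proof (rule pmf_embed_pmf)
  show "0 \<le> f x" for x by (rule assms(1))
  have "(\<integral>\<^sup>+ x. ennreal (f x) \<partial>count_space UNIV) = (\<Sum>x<k. ennreal (f x))"
    by (rule nn_integral_count_space'[of "{..<k}"]) (auto simp: assms(2))
  also have "\<dots> = 1" using assms by simp
  finally show "(\<integral>\<^sup>+ x. ennreal (f x) \<partial>count_space UNIV) = 1" .
qed

lemma coins_prob: "prob_space coins"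
  unfolding coins_def by (rule prob_space_PiM) (simp add: prob_space_measure_pmf)

lemma opt_len_le: fixes c :: "nat \<Rightarrow> bool list" shows "inj c \<Longrightarrow> opt_len P \<le> (\<integral>\<^sup>+ m. ennreal (real (length (c m))) \<partial>measure_pmf P)"
  unfolding opt_len_def by (rule INF_lower2[of c]) auto

lemma sum_if1: "i < k \<Longrightarrow> (\<Sum>m<k. if m = i then A else B) = A + (real k - 1) * (B::real)"
proof -
  assume i: "i < k"
  have "(\<Sum>m<k. if m = i then A else B) = (\<Sum>m<k. B + (if m = i then A - B else 0))"
    by (intro sum.cong) auto
  also have "\<dots> = real k * B + (A - B)" using i by (simp add: sum.distrib)
  finally show ?thesis by (simp add: algebra_simps)
qed

lemma sum_if2: "i < k \<Longrightarrow> j < k \<Longrightarrow> i \<noteq> j \<Longrightarrow>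
   (\<Sum>m<k. if m = i \<or> m = j then A else B) = 2 * A + (real k - 2) * (B::real)"
proof -
  assume i: "i < k" "j < k" "i \<noteq> j"
  have "(\<Sum>m<k. if m = i \<or> m = j then A else B) = (\<Sum>m<k. B + (if m = i then A - B else 0) + (if m = j then A - B else 0))"
    using i by (intro sum.cong) auto
  also have "\<dots> = real k * B + (A - B) + (A - B)" using i by (simp add: sum.distrib)
  finally show ?thesis by (simp add: algebra_simps)
qed



lemma numeric:
  fixes \<alpha> :: nat
  assumes al: "\<alpha> \<ge> 64"
  defines "a \<equiv> real \<alpha>"
  defines "x \<equiv> log 2 a"
  defines "y \<equiv> a^2 / x"
  defines "T \<equiv> nat \<lfloor>log 2 y\<rfloor>"
  shows "2 ^ T \<ge> a + 1" "real T \<ge> 2*x - log 2 x - 1" "real T \<le> 2*x" "2 ^ T \<le> y" "x \<ge> 6"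
    "x \<le> a / 4"
proof -
  have a64: "a \<ge> 64" using al a_def by simp
  have "log 2 64 \<le> x" unfolding x_def using a64 by (intro log_mono) auto
  moreover have "log 2 (64::real) = 6"
    using log_nat_power[of "2::real" 2 6] by simp
  ultimately show x6: "x \<ge> 6" by simp
  show x4: "x \<le> a / 4" unfolding x_def a_def using log_small[of \<alpha>] al by simp
  have ypos: "y > 0" unfolding y_def using x6 a64 by simp
  have ly: "log 2 y = 2 * x - log 2 x" unfolding y_def x_def using x6 a64 x_def
    by (simp add: log_divide log_nat_power)
  have lx: "log 2 x \<ge> 0" using x6 by simp
  have y4: "y \<ge> 4 * a" unfolding y_def using x4 x6 a64
    by (simp add: field_simps power2_eq_square)
  have yle: "y \<le> a^2" unfolding y_def using x6 a64 by (simp add: field_simps)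
  have ly0: "log 2 y \<ge> 0" using y4 a64 by simp
  have Tr: "real T = of_int \<lfloor>log 2 y\<rfloor>" unfolding T_def using ly0 by simp
  have "2 ^ T = (2::real) powr real T" by (simp add: powr_realpow)
  also have "\<dots> \<le> 2 powr (log 2 y)" unfolding Tr by (intro powr_mono) auto
  also have "\<dots> = y" using ypos by simp
  finally show ky: "2 ^ T \<le> y" .
  have "y = 2 powr (log 2 y)" using ypos by simp
  also have "\<dots> < 2 powr (real T + 1)" unfolding Tr by (intro powr_less_mono) (simp_all add: real_of_int_floor_add_one_gt)
  also have "\<dots> = 2 * 2 ^ T" by (simp add: powr_add powr_realpow)
  finally have yk: "y < 2 * 2 ^ T" .
  show "2 ^ T \<ge> a + 1" using yk y4 a64 by simp
  have "log 2 y < real T + 1" unfolding Tr by linarith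
  then show "real T \<ge> 2*x - log 2 x - 1" using ly by simp
  have "log 2 y \<le> log 2 (a^2)" using ypos yle by (intro log_mono) auto
  also have "\<dots> = 2 * x" unfolding x_def using a64 by (simp add: log_nat_power)
  finally show "real T \<le> 2*x" using Tr by linarith
qed

lemma yy_facts:
  fixes a k cc yy :: real
  assumes a: "a \<ge> 1" and k: "k \<ge> a + 1" "k \<ge> 3"
    and cc: "cc = 1 / (a^2 + k - 1)" and yy: "yy = (1 - 2*a*cc) / (k - 2)"
  shows "cc > 0" "yy \<le> a*cc" "cc \<le> a*yy" "yy \<ge> 0" "2*(a*cc) + (k-2)*yy = 1"
    "a^2*cc + (k-1)*cc = 1"
proof -
  define Dn where "Dn = a^2 + k - 1"
  have D: "Dn > 0" unfolding Dn_def using a k zero_le_power2[of a] by linarith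
  show c0: "cc > 0" using D cc Dn_def by simp
  show c1: "a^2*cc + (k-1)*cc = 1" using D cc Dn_def by (simp add: field_simps)
  have e1: "1 - 2*a*cc = (a^2 - 2*a + k - 1) * cc" using c1 by (simp add: algebra_simps)
  have yyc: "yy * (k - 2) = (a^2 - 2*a + k - 1) * cc" using yy e1 k by (simp add: field_simps)
  show "2*(a*cc) + (k-2)*yy = 1" using yyc e1 by (simp add: algebra_simps)
  have m1: "(a - 1) * (a + 1) \<le> (a - 1) * k" using a k by (intro mult_left_mono) auto
  have h1: "a^2 - 2*a + k - 1 \<le> a * (k - 2)" using m1 by (simp add: algebra_simps power2_eq_square)
  have "(a^2 - 2*a + k - 1) * cc \<le> (a * (k - 2)) * cc" using mult_right_mono[OF h1, of cc] c0 by simp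
  then have "yy * (k - 2) \<le> (a * cc) * (k - 2)" using yyc by (simp add: algebra_simps)
  then show "yy \<le> a*cc" using k by simp
  have sq: "a^2 - 2*a + 1 = (a-1)^2" by (simp add: power2_eq_square algebra_simps)
  have st0: "k - 2 \<le> a^2 - 2*a + k - 1" using sq zero_le_power2[of "a-1"] by linarith
  have h2: "1 * (a^2 - 2*a + k - 1) \<le> a * (a^2 - 2*a + k - 1)"
    using st0 k a by (intro mult_right_mono) auto
  have "cc * (k - 2) \<le> cc * (a * (a^2 - 2*a + k - 1))" using st0 h2 c0 by (intro mult_left_mono) auto
  moreover have "(a * yy) * (k - 2) = cc * (a * (a^2 - 2*a + k - 1))"
  proof -
    have "(a * yy) * (k - 2) = a * (yy * (k - 2))" by simp
    also have "\<dots> = a * ((a^2 - 2*a + k - 1) * cc)" using yyc by simp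
    finally show ?thesis by (simp add: algebra_simps)
  qed
  ultimately have cy: "cc * (k - 2) \<le> (a * yy) * (k - 2)" by (simp only:)
  then show ay: "cc \<le> a*yy" using k by simp
  show "yy \<ge> 0"
  proof (rule ccontr)
    assume "\<not> yy \<ge> 0"
    then have "a * yy \<le> 0" using a by (intro mult_nonneg_nonpos) auto
    then show False using ay c0 by linarith
  qed
qed

lemma main:
  fixes E :: "nat \<Rightarrow> nat \<Rightarrow> (nat \<Rightarrow> bool) \<Rightarrow> nat pmf \<Rightarrow> bool list"
  assumes ef: "error_free_scheme E D"
    and meas: "\<forall>m \<alpha> P. (\<lambda>R. real (length (E m \<alpha> R P))) \<in> borel_measurable coins"
    and al: "\<alpha> \<ge> 64"
  shows "\<exists>P Q. alpha_close (real \<alpha>) P Q \<and> opt_len P < \<infinity> \<and>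
           enn2ereal (enc_length E P \<alpha>) \<ge>
             enn2ereal (opt_len P) + ereal (2 * log 2 \<alpha> - 3 * log 2 (log 2 \<alpha>) - 5)"
proof -
  define a where "a = real \<alpha>"
  define x where "x = log 2 a"
  define y where "y = a^2 / x"
  define T where "T = nat \<lfloor>log 2 y\<rfloor>"
  define k where "k = (2::nat) ^ T"
  have num: "2 ^ T \<ge> a + 1" "real T \<ge> 2*x - log 2 x - 1" "real T \<le> 2*x" "2 ^ T \<le> y" "x \<ge> 6"
    "x \<le> a / 4"
    using numeric[OF al] unfolding T_def y_def x_def a_def by auto
  have rk: "real k = 2 ^ T" unfolding k_def by simp
  have a64: "a \<ge> 64" using al a_def by simp
  have ka: "real k \<ge> a + 1" using num rk by simp
  have k3: "real k \<ge> 3" using ka a64 by simp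
  have kpos: "k > 0" unfolding k_def by simp
  have T2: "T \<ge> 2"
  proof (rule ccontr)
    assume "\<not> T \<ge> 2"
    then have "(2::nat)^T \<le> 2^1" by (intro power_increasing) auto
    then have "real k \<le> 2" unfolding k_def by (metis of_nat_le_iff of_nat_numeral power_one_right)
    then show False using k3 by simp
  qed
  define cc where "cc = 1 / (a^2 + real k - 1)"
  define yy where "yy = (1 - 2*a*cc) / (real k - 2)"
  have yf: "cc > 0" "yy \<le> a*cc" "cc \<le> a*yy" "yy \<ge> 0" "2*(a*cc) + (real k-2)*yy = 1"
    "a^2*cc + (real k-1)*cc = 1"
    using yy_facts[of a "real k" cc yy] a64 ka k3 cc_def yy_def by auto
  define pf where "pf i m = (if m < k then (if m = i then a^2*cc else cc) else 0)" for i m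
  define qf where "qf i j m = (if m < k then (if m = i \<or> m = j then a*cc else yy) else 0)" for i j m
  define P where "P i = embed_pmf (pf i)" for i
  define Q where "Q i j = embed_pmf (qf i j)" for i j
  have pf0: "pf i m \<ge> 0" for i m unfolding pf_def using yf by auto
  have pP: "pmf (P i) m = pf i m" if i: "i < k" for i m
    unfolding P_def
  proof (rule pmf_mk[of _ k])
    show "0 \<le> pf i m" for m by (rule pf0)
    show "pf i m = 0" if "k \<le> m" for m using that unfolding pf_def by simp
    have "(\<Sum>m<k. pf i m) = (\<Sum>m<k. if m = i then a^2*cc else cc)" unfolding pf_def by (intro sum.cong) auto
    also have "\<dots> = 1" using sum_if1[OF i] yf(6) by simp
    finally show "(\<Sum>m<k. pf i m) = 1" .
  qed
  have pQ: "pmf (Q i j) m = qf i j m" if ij: "i < k" "j < k" "i \<noteq> j" for i j m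
    unfolding Q_def
  proof (rule pmf_mk[of _ k])
    show "0 \<le> qf i j m" for m unfolding qf_def using yf by auto
    show "qf i j m = 0" if "k \<le> m" for m using that unfolding qf_def by simp
    have "(\<Sum>m<k. qf i j m) = (\<Sum>m<k. if m = i \<or> m = j then a*cc else yy)" unfolding qf_def by (intro sum.cong) auto
    also have "\<dots> = 1" using sum_if2[OF ij] yf(5) by simp
    finally show "(\<Sum>m<k. qf i j m) = 1" .
  qed
  have cl_self: "alpha_close a (P i) (P i)" for i
    unfolding alpha_close_def
  proof
    fix m
    have p: "pmf (P i) m \<ge> 0" by simp
    have "1 * pmf (P i) m \<le> a * pmf (P i) m" using a64 p by (intro mult_right_mono) auto
    moreover have "(1/a) * pmf (P i) m \<le> 1 * pmf (P i) m" using a64 p by (intro mult_right_mono) auto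
    ultimately show "1 / a * pmf (P i) m \<le> pmf (P i) m \<and> pmf (P i) m \<le> a * pmf (P i) m" by simp
  qed
  have clQ: "alpha_close a (P i) (Q i j) \<and> alpha_close a (P j) (Q i j)"
    if ij: "i < k" "j < k" "i \<noteq> j" for i j
  proof -
    have f1: "1/a * (a*cc) = cc" using a64 by simp
    have "1 * 1 \<le> a * a" using a64 by (intro mult_mono) auto
    then have f2: "cc \<le> a^2*cc" using yf(1) a64 by (simp add: power2_eq_square)
    have f3: "a^2*cc = a*(a*cc)" by (simp add: power2_eq_square)
    have f4: "1/a * yy \<le> cc" using yf(2) a64 by (simp add: field_simps)
    have f5: "1/a * 0 \<le> (0::real)" "(0::real) \<le> a * 0" by auto
    show ?thesis unfolding alpha_close_def pP[OF ij(1)] pP[OF ij(2)] pQ[OF ij] pf_def qf_def using f1 f2 f3 f4 f5 yf(3) ij(3) by auto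
  qed
  have dist: "m = m'" if "i < k" "j < k" "E m \<alpha> R (P i) = E m' \<alpha> R (P j)" for i j m m' R
  proof (cases "i = j")
    case True
    have "D (E m \<alpha> R (P i)) \<alpha> R (P i) = m" using ef cl_self unfolding error_free_scheme_def a_def by blast
    moreover have "D (E m' \<alpha> R (P j)) \<alpha> R (P i) = m'" using ef cl_self True unfolding error_free_scheme_def a_def by blast
    ultimately show ?thesis using that by simp
  next
    case False
    have "D (E m \<alpha> R (P i)) \<alpha> R (Q i j) = m" using ef clQ[OF that(1,2) False] unfolding error_free_scheme_def a_def by blast
    moreover have "D (E m' \<alpha> R (P j)) \<alpha> R (Q i j) = m'" using ef clQ[OF that(1,2) False] unfolding error_free_scheme_def a_def by blast
    ultimately show ?thesis using that by simp
  qed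
  have pz: "pmf (P i) m = 0" if "i < k" "k \<le> m" for i m using that pP unfolding pf_def by simp
  have ccT: "(real k - 1) * cc * real T \<le> 2"
  proof -
    have "a^2 > 0" using a64 by simp
    moreover have "a^2 + real k - 1 > 0" using ka a64 \<open>a^2 > 0\<close> by linarith
    ultimately have c1: "cc \<le> 1 / a^2" unfolding cc_def using ka kpos
      by (intro divide_left_mono) (auto intro!: mult_pos_pos)
    have "(real k - 1) * cc \<le> real k * (1 / a^2)" using c1 yf(1) by (intro mult_mono) auto
    also have "\<dots> \<le> y * (1 / a^2)" using num(4) rk by (intro mult_right_mono) auto
    also have "\<dots> = 1 / x" unfolding y_def using a64 by simp
    finally have "(real k - 1) * cc * real T \<le> (1/x) * real T" by (intro mult_right_mono) auto
    also have "\<dots> \<le> (1/x) * (2*x)" using num(3,5) by (intro mult_left_mono) auto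
    also have "\<dots> = 2" using num(5) by simp
    finally show ?thesis .
  qed
  have opt: "opt_len (P i) \<le> ennreal 2" if i: "i < k" for i
  proof -
    define c where "c m = bin (if m = i then 0 else if m = 0 then i else m)" for m
    have injc: "inj c" unfolding c_def
      by (rule injI) (drule injD[OF bin_inj], auto split: if_splits)
    have lenc: "length (c m) \<le> T" if "m < k" "m \<noteq> i" for m
    proof -
      have "(2::nat) ^ length (c m) \<le> (if m = 0 then i else m) + 1" unfolding c_def using that bin_len by simp
      also have "\<dots> \<le> 2 ^ T" using that i unfolding k_def by auto
      finally show ?thesis by (rule power_le_imp_le_exp[rotated]) simp
    qed
    have "opt_len (P i) \<le> (\<integral>\<^sup>+ m. ennreal (real (length (c m))) \<partial>measure_pmf (P i))"
      by (rule opt_len_le[OF injc])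
    also have "\<dots> = (\<Sum>m<k. ennreal (pmf (P i) m) * ennreal (real (length (c m))))"
      by (rule nn_pmf_fin) (rule pz[OF i])
    also have "\<dots> = (\<Sum>m<k. ennreal (pf i m * real (length (c m))))"
      using pP[OF i] pf0 by (intro sum.cong refl) (simp add: ennreal_mult)
    also have "\<dots> = ennreal (\<Sum>m<k. pf i m * real (length (c m)))"
      using pf0 by (intro sum_ennreal) simp
    also have "\<dots> \<le> ennreal 2"
    proof (rule ennreal_leI)
      have "(\<Sum>m<k. pf i m * real (length (c m))) \<le> (\<Sum>m<k. if m = i then 0 else cc * real T)"
      proof (rule sum_mono)
        fix m assume m: "m \<in> {..<k}"
        show "pf i m * real (length (c m)) \<le> (if m = i then 0 else cc * real T)"
        proof (cases "m = i")
          case True then show ?thesis unfolding c_def by simp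
        next
          case False then show ?thesis unfolding pf_def using m lenc[of m] yf(1) by (auto intro: mult_left_mono)
        qed
      qed
      also have "\<dots> = (real k - 1) * cc * real T" using sum_if1[OF i] by simp
      finally show "(\<Sum>m<k. pf i m * real (length (c m))) \<le> 2" using ccT by linarith
    qed
    finally show ?thesis .
  qed
  have measL[measurable]: "(\<lambda>R. ennreal (real (length (E m \<alpha> R P')))) \<in> borel_measurable coins" for m P'
    using measurable_compose[OF meas[rule_format] measurable_ennreal] by (simp add: comp_def)
  define L where "L i m R = ennreal (real (length (E m \<alpha> R (P i))))" for i m R
  have encf: "enc_length E (P i) \<alpha> = (\<Sum>m<k. ennreal (pf i m) * (\<integral>\<^sup>+R. L i m R \<partial>coins))" if i: "i < k" for i
    unfolding enc_length_def L_def
    by (subst nn_pmf_fin[of k]) (auto simp: pz[OF i] pP[OF i] pf_def)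
  have "(\<integral>\<^sup>+R. (\<Sum>i<k. \<Sum>m<k. ennreal (pf i m) * L i m R) \<partial>coins) = (\<Sum>i<k. \<integral>\<^sup>+R. (\<Sum>m<k. ennreal (pf i m) * L i m R) \<partial>coins)"
    unfolding L_def by (rule nn_integral_sum) measurable
  also have "\<dots> = (\<Sum>i<k. \<Sum>m<k. \<integral>\<^sup>+R. ennreal (pf i m) * L i m R \<partial>coins)"
    unfolding L_def by (intro sum.cong refl nn_integral_sum) measurable
  also have "\<dots> = (\<Sum>i<k. \<Sum>m<k. ennreal (pf i m) * \<integral>\<^sup>+R. L i m R \<partial>coins)"
    unfolding L_def by (intro sum.cong refl nn_integral_cmult) measurable
  also have "\<dots> = (\<Sum>i<k. enc_length E (P i) \<alpha>)" by (intro sum.cong refl encf[symmetric]) simp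
  finally have sw: "(\<Sum>i<k. enc_length E (P i) \<alpha>) = (\<integral>\<^sup>+R. (\<Sum>i<k. \<Sum>m<k. ennreal (pf i m) * L i m R) \<partial>coins)" ..
  have pw: "ennreal (real k * (real T - 2)) \<le> (\<Sum>i<k. \<Sum>m<k. ennreal (pf i m) * L i m R)" for R
  proof -
    have "(\<Sum>i<k. \<Sum>m<k. ennreal (pf i m) * L i m R) = (\<Sum>i<k. ennreal (\<Sum>m<k. pf i m * real (length (E m \<alpha> R (P i)))))"
      unfolding L_def using pf0 by (intro sum.cong refl) (simp add: ennreal_mult[symmetric] sum_ennreal)
    also have "\<dots> = ennreal (\<Sum>i<k. \<Sum>m<k. pf i m * real (length (E m \<alpha> R (P i))))"
      using pf0 by (intro sum_ennreal) (simp add: sum_nonneg)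
    finally have e: "(\<Sum>i<k. \<Sum>m<k. ennreal (pf i m) * L i m R) = \<dots>" .
    have ps: "(\<Sum>i<k. pf i m) = 1" if m: "m < k" for m
    proof -
      have "(\<Sum>i<k. pf i m) = (\<Sum>i<k. if i = m then a^2*cc else cc)" unfolding pf_def using m by (intro sum.cong) auto
      also have "\<dots> = 1" using sum_if1[OF m] yf(6) by simp
      finally show ?thesis .
    qed
    have kk: "real T * real k - 2^(T+1) + 2 \<le> (\<Sum>i<k. \<Sum>m<k. pf i m * real (length (E m \<alpha> R (P i))))"
      by (rule key[OF kpos pf0 ps dist]) auto
    have "real k * (real T - 2) \<le> real T * real k - 2^(T+1) + 2" using rk by (simp add: algebra_simps)
    with kk e show ?thesis by (simp add: ennreal_leI)
  qed
  have sumenc: "(\<Sum>i<k. enc_length E (P i) \<alpha>) \<ge> ennreal (real k * (real T - 2))"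
  proof -
    interpret prob_space coins by (rule coins_prob)
    have "ennreal (real k * (real T - 2)) = (\<integral>\<^sup>+R. ennreal (real k * (real T - 2)) \<partial>coins)"
      by (simp add: emeasure_space_1)
    also have "\<dots> \<le> (\<integral>\<^sup>+R. (\<Sum>i<k. \<Sum>m<k. ennreal (pf i m) * L i m R) \<partial>coins)"
      by (intro nn_integral_mono pw)
    finally show ?thesis using sw by simp
  qed
  define en where "en i = enc_length E (P i) \<alpha>" for i
  have fin: "finite (en ` {..<k})" "en ` {..<k} \<noteq> {}" using kpos by auto
  obtain i0 where i0k: "i0 < k" and i0m: "en i0 = Max (en ` {..<k})"
    using Max_in[OF fin] by auto
  have le: "en i \<le> en i0" if "i < k" for i unfolding i0m using fin that by (intro Max_ge) auto
  have "(\<Sum>i<k. en i) \<le> of_nat (card {..<k}) * en i0" by (rule sum_bounded_above) (use le in auto)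
  then have "of_nat k * ennreal (real T - 2) \<le> of_nat k * en i0"
    using sumenc unfolding en_def using T2
    by (simp add: ennreal_mult ennreal_of_nat_eq_real_of_nat)
  then have i0: "i0 < k" "enc_length E (P i0) \<alpha> \<ge> ennreal (real T - 2)"
    using i0k kpos ennreal_mult_le_mult_iff[of "of_nat k"] unfolding en_def by auto
  have o: "enn2ereal (opt_len (P i0)) \<le> ereal 2"
  proof -
    have "enn2ereal (opt_len (P i0)) \<le> enn2ereal (ennreal 2)" using opt[OF i0(1)] by (simp add: less_eq_ennreal.rep_eq)
    then show ?thesis by simp
  qed
  have e: "ereal (real T - 2) \<le> enn2ereal (enc_length E (P i0) \<alpha>)"
  proof -
    have "enn2ereal (ennreal (real T - 2)) \<le> enn2ereal (enc_length E (P i0) \<alpha>)" using i0(2) by (simp add: less_eq_ennreal.rep_eq)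
    then show ?thesis using T2 by simp
  qed
  have lx: "log 2 x \<ge> 0" using num(5) by simp
  have b: "2 + (2 * log 2 \<alpha> - 3 * log 2 (log 2 \<alpha>) - 5) \<le> real T - 2"
    using num(2) lx unfolding x_def a_def by linarith
  have "enn2ereal (opt_len (P i0)) + ereal (2 * log 2 \<alpha> - 3 * log 2 (log 2 \<alpha>) - 5)
      \<le> ereal 2 + ereal (2 * log 2 \<alpha> - 3 * log 2 (log 2 \<alpha>) - 5)"
    using o by (rule add_right_mono)
  also have "\<dots> \<le> ereal (real T - 2)" using b by simp
  also have "\<dots> \<le> enn2ereal (enc_length E (P i0) \<alpha>)" by (rule e)
  finally have "enn2ereal (opt_len (P i0)) + ereal (2 * log 2 \<alpha> - 3 * log 2 (log 2 \<alpha>) - 5)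
      \<le> enn2ereal (enc_length E (P i0) \<alpha>)" .
  moreover have "opt_len (P i0) < \<infinity>" using opt[OF i0(1)]
    by (metis ennreal_less_top infinity_ennreal_def le_less_trans)
  ultimately show ?thesis using cl_self[of i0] unfolding a_def by blast
qed


theorem theorem2:
  shows "\<exists>(C::real) (\<alpha>0::nat). \<forall>E D. error_free_scheme E D \<longrightarrow>
     (\<forall>m \<alpha> P. (\<lambda>R. real (length (E m \<alpha> R P))) \<in> borel_measurable coins) \<longrightarrow>
     (\<forall>\<alpha>::nat. \<alpha> \<ge> \<alpha>0 \<longrightarrow>
        (\<exists>P Q. alpha_close (real \<alpha>) P Q \<and> opt_len P < \<infinity> \<and>
           enn2ereal (enc_length E P \<alpha>) \<ge>
             enn2ereal (opt_len P) + ereal (2 * log 2 \<alpha> - 3 * log 2 (log 2 \<alpha>) - C)))"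
  by (intro exI[of _ 5] exI[of _ 64] allI impI main) auto

end
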